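(* Let $S = s_1,\ldots,s_n$ be a sequence of nonnegative integers, let $0<\alpha<1$, $\gamma>0$, let $k$ be a positive integer, and let $\epsilon>0$. Suppose $(L^*,\beta^* )$ is an optimal solution of $\textsc{Geo}(\alpha)$ for $S,\alpha,\gamma,k$, and let $(L,\beta)$ be the output of $\textit{GeoAlpha}(S,\alpha,\gamma,k,\epsilon)$. Then \[ \mathrm{score}_{\mathrm{geo}}(L,S;\alpha,\beta,\gamma) \le (1+\epsilon)\,\mathrm{score}_{\mathrm{geo}}(L^*,S;\alpha,\beta^*,\gamma). \]
   Context: A level sequence is $L = \ell_1,\ldots,\ell_n$ of integers with $0\le\ell_i\le k$; set $\ell_0=0$. The penalty is $\mathrm{pen}(x,y)=\max(y-x,0)\,\gamma\log n$. The geometric distribution is $p_{\mathrm{geo}}(s;\lambda) = (1-\lambda)\lambda^s$. For $0<\beta<1$ the score is $\mathrm{score}_{\mathrm{geo}}(L,S;\alpha,\beta,\gamma) = \sum_{i=1}^n\big[-\log p_{\mathrm{geo}}(s_i;\beta\alpha^{\ell_i}) + \mathrm{pen}(\ell_{i-1},\ell_i)\big]$. Problem $\textsc{Geo}(\alpha)$: given $S,\alpha,\gamma,k$, find a level sequence $L$ and $\beta\in(0,1)$ minimizing this score. $\textit{Viterbi}(S,\alpha,\beta,\gamma,k,p_{\mathrm{geo}})$ returns a level sequence minimizing $\mathrm{score}_{\mathrm{geo}}(\cdot,S;\alpha,\beta,\gamma)$ for the fixed $\alpha,\beta$. Algorithm $\textit{GeoAlpha}(S,\alpha,\gamma,k,\epsilon)$: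 let $\mu=\frac1n\sum_i s_i$. If $\mu=0$, return the all-zero level sequence. Otherwise let $\eta=\mu/(\mu+1)$ and $c=1$; while $\eta^c \le \mu/(\mu+1/n)$: set $\beta=\eta^c$, compute $L=\textit{Viterbi}(S,\alpha,\beta,\gamma,k,p_{\mathrm{geo}})$, and set $c \leftarrow c/(1+\epsilon)$. Return the pair $(L,\beta)$ with the smallest score $\mathrm{score}_{\mathrm{geo}}(L,S;\alpha,\beta,\gamma)$ among the tested ones. *)

theory Defs
  imports Complex_Main
begin

text \<open>Lists are 0-indexed, so
 entry i of the list is s_(i+1); the predecessor level of position 0 is l_0 = 0.\<close>

definition level_seq :: "nat \<Rightarrow> nat \<Rightarrow> nat list \<Rightarrow> bool" where
  "level_seq n k L \<longleftrightarrow> length L = n \<and> (\<forall>i<n. L ! i \<le> k)"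

definition pen :: "nat \<Rightarrow> real \<Rightarrow> nat \<Rightarrow> nat \<Rightarrow> real" where
  "pen n \<gamma> x y = max (real y - real x) 0 * \<gamma> * ln (real n)"

definition p_geo :: "nat \<Rightarrow> real \<Rightarrow> real" where
  "p_geo s lam = (1 - lam) * lam ^ s"

definition prev_level :: "nat list \<Rightarrow> nat \<Rightarrow> nat" where
  "prev_level L i = (if i = 0 then 0 else L ! (i - 1))"

definition score_geo :: "nat list \<Rightarrow> nat list \<Rightarrow> real \<Rightarrow> real \<Rightarrow> real \<Rightarrow> real" where
  "score_geo L S \<alpha> \<beta> \<gamma> =
     (\<Sum>i<length S. - ln (p_geo (S ! i) (\<beta> * \<alpha> ^ (L ! i)))
                     + pen (length S) \<gamma> (prev_level L i) (L ! i))"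

definition is_viterbi :: "nat list \<Rightarrow> real \<Rightarrow> real \<Rightarrow> real \<Rightarrow> nat \<Rightarrow> nat list \<Rightarrow> bool" where
  "is_viterbi S \<alpha> \<beta> \<gamma> k L \<longleftrightarrow> level_seq (length S) k L \<and>
     (\<forall>L'. level_seq (length S) k L' \<longrightarrow> score_geo L S \<alpha> \<beta> \<gamma> \<le> score_geo L' S \<alpha> \<beta> \<gamma>)"

definition geo_optimal :: "nat list \<Rightarrow> real \<Rightarrow> real \<Rightarrow> nat \<Rightarrow> nat list \<Rightarrow> real \<Rightarrow> bool" where
  "geo_optimal S \<alpha> \<gamma> k L \<beta> \<longleftrightarrow> level_seq (length S) k L \<and> 0 < \<beta> \<and> \<beta> < 1 \<and>
     (\<forall>L' \<beta>'. level_seq (length S) k L' \<and> 0 < \<beta>' \<and> \<beta>' < 1 \<longrightarrow>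
        score_geo L S \<alpha> \<beta> \<gamma> \<le> score_geo L' S \<alpha> \<beta>' \<gamma>)"

definition mean_seq :: "nat list \<Rightarrow> real" where
  "mean_seq S = (\<Sum>i<length S. real (S ! i)) / real (length S)"

text \<open>In iteration j (j = 0,1,...) of the while loop, c = (1+eps)^(-j) and beta = eta^c.
 The loop runs iteration j iff the guard held in iterations 0..j.\<close>
definition ga_beta :: "nat list \<Rightarrow> real \<Rightarrow> nat \<Rightarrow> real" where
  "ga_beta S \<epsilon> j = (mean_seq S / (mean_seq S + 1)) powr ((1 + \<epsilon>) powr (- real j))"

definition ga_tested :: "nat list \<Rightarrow> real \<Rightarrow> real set" where
  "ga_tested S \<epsilon> = {ga_beta S \<epsilon> j | j. \<forall>i\<le>j.
      ga_beta S \<epsilon> i \<le> mean_seq S / (mean_seq S + 1 / real (length S))}"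

text \<open>Output relation of GeoAlpha, relative to a fixed Viterbi implementation V
 (V beta is the level sequence returned by Viterbi for beta). Ties in the final
 selection may be broken arbitrarily. In the case mu = 0 the algorithm returns
 only the all-zero sequence; the accompanying beta is left unconstrained in (0,1).\<close>
definition geo_alpha_output ::
  "(real \<Rightarrow> nat list) \<Rightarrow> nat list \<Rightarrow> real \<Rightarrow> real \<Rightarrow> nat \<Rightarrow> real \<Rightarrow> nat list \<Rightarrow> real \<Rightarrow> bool" where
  "geo_alpha_output V S \<alpha> \<gamma> k \<epsilon> L \<beta> \<longleftrightarrow>
     (if mean_seq S = 0 then L = replicate (length S) 0 \<and> 0 < \<beta> \<and> \<beta> < 1
      else \<beta> \<in> ga_tested S \<epsilon> \<and> L = V \<beta> \<and>
           (\<forall>\<beta>'\<in>ga_tested S \<epsilon>. score_geo (V \<beta>) S \<alpha> \<beta> \<gamma> \<le> score_geo (V \<beta>') S \<alpha> \<beta>' \<gamma>))"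

end

theory Submission
  imports Defs
begin

definition lik :: "nat list \<Rightarrow> real \<Rightarrow> nat list \<Rightarrow> real \<Rightarrow> real" where
  "lik S \<alpha> L b = (\<Sum>i<length S. - ln (1 - b * \<alpha> ^ (L ! i)))"

definition rest :: "nat list \<Rightarrow> real \<Rightarrow> real \<Rightarrow> nat list \<Rightarrow> real" where
  "rest S \<alpha> \<gamma> L = (\<Sum>i<length S. - real (S ! i) * real (L ! i) * ln \<alpha>
      + pen (length S) \<gamma> (prev_level L i) (L ! i))"

definition tot :: "nat list \<Rightarrow> real" where
  "tot S = (\<Sum>i<length S. real (S ! i))"

lemma prod_lt1:
  fixes x a :: real
  assumes "0 < x" "x < 1" "0 < a" "a \<le> 1"
  shows "x * a < 1"
  using mult_left_le[of a x] assms by linarith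

lemma score_decomp:
  assumes a: "0 < \<alpha>" "\<alpha> < 1" and b: "0 < b" "b < 1"
  shows "score_geo L S \<alpha> b \<gamma> = lik S \<alpha> L b - tot S * ln b + rest S \<alpha> \<gamma> L"
proof -
  have t: "- ln (p_geo (S ! i) (b * \<alpha> ^ (L ! i))) + pen (length S) \<gamma> (prev_level L i) (L ! i)
    = - ln (1 - b * \<alpha> ^ (L ! i)) - real (S ! i) * ln b
      + (- real (S ! i) * real (L ! i) * ln \<alpha> + pen (length S) \<gamma> (prev_level L i) (L ! i))" for i
  proof -
    have p: "0 < \<alpha> ^ (L ! i)" "\<alpha> ^ (L ! i) \<le> 1" using a by (auto simp: power_le_one)
    have x: "0 < b * \<alpha> ^ (L ! i)" "b * \<alpha> ^ (L ! i) < 1" using p b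
      by (auto simp: mult_less_le_imp_less[of b 1 "\<alpha> ^ (L ! i)" 1, simplified])
    have "ln (p_geo (S ! i) (b * \<alpha> ^ (L ! i))) = ln (1 - b * \<alpha> ^ (L ! i)) + real (S ! i) * ln (b * \<alpha> ^ (L ! i))"
    proof -
      define x where "x = b * \<alpha> ^ (L ! i)"
      have "0 < x" "x < 1" using x x_def by auto
      then have "ln ((1 - x) * x ^ (S ! i)) = ln (1 - x) + real (S ! i) * ln x"
        by (simp add: ln_mult ln_realpow)
      then show ?thesis unfolding p_geo_def x_def .
    qed
    also have "ln (b * \<alpha> ^ (L ! i)) = ln b + real (L ! i) * ln \<alpha>"
      using a b by (simp add: ln_mult ln_realpow)
    finally show ?thesis by (simp add: algebra_simps)
  qed
  show ?thesis
    unfolding score_geo_def lik_def rest_def tot_def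
    by (simp only: t sum.distrib sum_subtractf sum_distrib_right sum_negf)
qed

lemma rest_nonneg:
  assumes "0 < \<alpha>" "\<alpha> < 1" "0 < \<gamma>" "S \<noteq> []"
  shows "0 \<le> rest S \<alpha> \<gamma> L"
  unfolding rest_def
proof (rule sum_nonneg)
  fix i
  have "ln \<alpha> < 0" using assms by simp
  hence "0 \<le> - real (S ! i) * real (L ! i) * ln \<alpha>"
    by (simp add: mult_nonneg_nonpos)
  moreover have "0 \<le> pen (length S) \<gamma> (prev_level L i) (L ! i)"
    unfolding pen_def using assms by (auto simp: Suc_le_eq intro!: mult_nonneg_nonneg)
  ultimately show "0 \<le> - real (S ! i) * real (L ! i) * ln \<alpha> + pen (length S) \<gamma> (prev_level L i) (L ! i)"
    by simp
qed

lemma lik_nonneg: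
  assumes "0 < \<alpha>" "\<alpha> < 1" "0 < b" "b < 1"
  shows "0 \<le> lik S \<alpha> L b"
  unfolding lik_def
proof (rule sum_nonneg)
  fix i
  have p: "0 < \<alpha> ^ (L ! i)" "\<alpha> ^ (L ! i) \<le> 1" using assms(1,2) by (auto simp: power_le_one)
  have "0 < b * \<alpha> ^ (L ! i)" using p assms by simp
  moreover have "b * \<alpha> ^ (L ! i) < 1" using p assms
    by (intro prod_lt1) auto
  ultimately show "0 \<le> - ln (1 - b * \<alpha> ^ (L ! i))" by simp
qed

lemma lik_mono:
  assumes "0 < \<alpha>" "\<alpha> < 1" "0 < b1" "b1 \<le> b2" "b2 < 1"
  shows "lik S \<alpha> L b1 \<le> lik S \<alpha> L b2"
  unfolding lik_def
proof (rule sum_mono)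
  fix i
  have p: "0 < \<alpha> ^ (L ! i)" "\<alpha> ^ (L ! i) \<le> 1" using assms(1,2) by (auto simp: power_le_one)
  have "b2 * \<alpha> ^ (L ! i) < 1" using p assms
    by (intro prod_lt1) auto
  moreover have "b1 * \<alpha> ^ (L ! i) \<le> b2 * \<alpha> ^ (L ! i)" using p assms by simp
  ultimately show "- ln (1 - b1 * \<alpha> ^ (L ! i)) \<le> - ln (1 - b2 * \<alpha> ^ (L ! i))" by simp
qed

lemma lik_deriv:
  assumes "0 < \<alpha>" "\<alpha> < 1" "0 < b" "b < 1"
  shows "((\<lambda>x. lik S \<alpha> L x - tot S * ln x) has_real_derivative
     ((\<Sum>i<length S. \<alpha> ^ (L ! i) / (1 - b * \<alpha> ^ (L ! i))) - tot S / b)) (at b)"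
proof -
  have d: "((\<lambda>x. - ln (1 - x * \<alpha> ^ (L ! i))) has_real_derivative \<alpha> ^ (L ! i) / (1 - b * \<alpha> ^ (L ! i))) (at b)" for i
  proof -
    have p: "0 < \<alpha> ^ (L ! i)" "\<alpha> ^ (L ! i) \<le> 1" using assms(1,2) by (auto simp: power_le_one)
    have "b * \<alpha> ^ (L ! i) < 1" using p assms
      by (intro prod_lt1) auto
    then show ?thesis
      by (auto intro!: derivative_eq_intros simp: field_simps)
  qed
  have s: "((\<lambda>x. lik S \<alpha> L x) has_real_derivative (\<Sum>i<length S. \<alpha> ^ (L ! i) / (1 - b * \<alpha> ^ (L ! i)))) (at b)"
    unfolding lik_def by (rule DERIV_sum) (rule d)
  have l: "((\<lambda>x. tot S * ln x) has_real_derivative tot S * (1 / b)) (at b)"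
    by (rule DERIV_cmult) (use assms in \<open>auto intro!: derivative_eq_intros\<close>)
  show ?thesis using DERIV_diff[OF s l] by simp
qed

lemma G_dec:
  assumes "0 < \<alpha>" "\<alpha> < 1" "0 < b1" "b1 \<le> b2" "b2 * (tot S + real (length S)) \<le> tot S"
    and ne: "S \<noteq> []"
  shows "lik S \<alpha> L b2 - tot S * ln b2 \<le> lik S \<alpha> L b1 - tot S * ln b1"
proof (rule DERIV_nonpos_imp_nonincreasing[OF assms(4)])
  fix x assume x: "b1 \<le> x" "x \<le> b2"
  have T: "0 \<le> tot S" unfolding tot_def by (simp add: sum_nonneg)
  have "x * (tot S + real (length S)) \<le> b2 * (tot S + real (length S))"
    by (rule mult_right_mono) (use x T in auto)
  then have xT: "x * (tot S + real (length S)) \<le> tot S" using assms(5) by linarith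
  have x1: "x < 1"
  proof (rule ccontr)
    assume "\<not> x < 1"
    then have "1 * (tot S + real (length S)) \<le> x * (tot S + real (length S))"
      by (intro mult_right_mono) (use T in auto)
    moreover have "0 < real (length S)" using ne by simp
    ultimately show False using xT by simp
  qed
  have x0: "0 < x" using x assms by simp
  have "(\<Sum>i<length S. \<alpha> ^ (L ! i) / (1 - x * \<alpha> ^ (L ! i))) \<le> (\<Sum>i<length S. 1 / (1 - x))"
  proof (rule sum_mono)
    fix i
    have p: "0 < \<alpha> ^ (L ! i)" "\<alpha> ^ (L ! i) \<le> 1" using assms(1,2) by (auto simp: power_le_one)
    have q: "x * \<alpha> ^ (L ! i) < 1" using p x0 x1
      by (intro prod_lt1) auto
    show "\<alpha> ^ (L ! i) / (1 - x * \<alpha> ^ (L ! i)) \<le> 1 / (1 - x)"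
      using p q x0 x1 by (simp add: divide_simps algebra_simps)
  qed
  also have "\<dots> = real (length S) / (1 - x)" by simp
  also have "\<dots> \<le> tot S / x"
    using x0 x1 \<open>x * (tot S + real (length S)) \<le> tot S\<close> by (simp add: divide_simps algebra_simps)
  finally show "\<exists>y. ((\<lambda>x. lik S \<alpha> L x - tot S * ln x) has_real_derivative y) (at x) \<and> y \<le> 0"
    using lik_deriv[OF assms(1,2) x0 x1] by (intro exI conjI) auto
qed

lemma G_inc:
  assumes "0 < \<alpha>" "\<alpha> < 1" "b1 \<le> b2" "b2 < 1" "tot S \<le> b1 * (tot S + 1)"
    and i0: "i0 < length S" "L ! i0 = 0" and T: "0 < tot S"
  shows "lik S \<alpha> L b1 - tot S * ln b1 \<le> lik S \<alpha> L b2 - tot S * ln b2"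
proof (rule DERIV_nonneg_imp_nondecreasing[OF assms(3)])
  fix x assume x: "b1 \<le> x" "x \<le> b2"
  have x0: "0 < x"
  proof (rule ccontr)
    assume "\<not> 0 < x"
    then have "b1 \<le> 0" using x by simp
    then have "b1 * (tot S + 1) \<le> 0" using T by (simp add: mult_nonpos_nonneg)
    then show False using assms(5) T by linarith
  qed
  have x1: "x < 1" using x assms by simp
  have nn: "0 \<le> \<alpha> ^ (L ! i) / (1 - x * \<alpha> ^ (L ! i))" for i
  proof -
    have p: "0 < \<alpha> ^ (L ! i)" "\<alpha> ^ (L ! i) \<le> 1" using assms(1,2) by (auto simp: power_le_one)
    have q: "x * \<alpha> ^ (L ! i) < 1" using p x0 x1
      by (intro prod_lt1) auto
    show ?thesis using p q by simp
  qed
  have "tot S / x \<le> 1 / (1 - x)"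
  proof -
    have "b1 * (tot S + 1) \<le> x * (tot S + 1)" by (rule mult_right_mono) (use x T in auto)
    then have "tot S \<le> x * (tot S + 1)" using assms(5) by linarith
    then show ?thesis using x0 x1 by (simp add: divide_simps algebra_simps)
  qed
  also have "1 / (1 - x) = \<alpha> ^ (L ! i0) / (1 - x * \<alpha> ^ (L ! i0))" using i0 by simp
  also have "\<dots> \<le> (\<Sum>i<length S. \<alpha> ^ (L ! i) / (1 - x * \<alpha> ^ (L ! i)))"
    by (rule member_le_sum) (use i0 nn in auto)
  finally show "\<exists>y. ((\<lambda>x. lik S \<alpha> L x - tot S * ln x) has_real_derivative y) (at x) \<and> y \<ge> 0"
    using lik_deriv[OF assms(1,2) x0 x1] by (intro exI conjI) auto
qed

lemma grid:
  fixes c0 \<epsilon> :: real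
  assumes "0 < c0" "c0 \<le> 1" "0 < \<epsilon>"
  shows "\<exists>j::nat. c0 \<le> 1 / (1 + \<epsilon>) ^ j \<and> 1 / (1 + \<epsilon>) ^ j \<le> (1 + \<epsilon>) * c0"
proof -
  define q where "q = 1 + \<epsilon>"
  have q1: "1 < q" using assms unfolding q_def by simp
  obtain N where N: "1 / c0 < q ^ N" using real_arch_pow[OF q1] by blast
  define N0 where "N0 = (LEAST N. 1 / c0 < q ^ N)"
  have N0: "1 / c0 < q ^ N0" unfolding N0_def by (rule LeastI[of _ N]) (rule N)
  have "N0 \<noteq> 0"
  proof
    assume "N0 = 0"
    with N0 have "1 / c0 < 1" by simp
    with assms show False by (simp add: field_simps)
  qed
  then obtain j where j: "N0 = Suc j" by (cases N0) auto
  have "\<not> 1 / c0 < q ^ j"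
  proof
    assume "1 / c0 < q ^ j"
    then have "N0 \<le> j" unfolding N0_def by (rule Least_le)
    then show False using j by simp
  qed
  then have a: "q ^ j \<le> 1 / c0" by simp
  have b: "1 / c0 < q * q ^ j" using N0 j by simp
  have qp: "0 < q ^ j" using q1 by simp
  have "c0 \<le> 1 / q ^ j" using a qp assms by (simp add: field_simps)
  moreover have "1 / q ^ j \<le> q * c0" using b qp assms by (simp add: field_simps)
  ultimately show ?thesis unfolding q_def by blast
qed

lemma shift_level_seq:
  assumes "level_seq n k L" "\<forall>i<n. m \<le> L ! i"
  shows "level_seq n k (map (\<lambda>x. x - m) L)"
  using assms unfolding level_seq_def by auto

lemma shift_score:
  assumes "0 < \<alpha>" "\<alpha> < 1" "0 < b" "b < 1" "0 < \<gamma>" "S \<noteq> []"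
    and L: "length L = length S" and m: "\<forall>i<length S. m \<le> L ! i"
  shows "score_geo (map (\<lambda>x. x - m) L) S \<alpha> (b * \<alpha> ^ m) \<gamma> \<le> score_geo L S \<alpha> b \<gamma>"
  unfolding score_geo_def
proof (rule sum_mono)
  fix i assume i: "i \<in> {..<length S}"
  have mi: "m \<le> L ! i" using m i by auto
  have e1: "b * \<alpha> ^ m * \<alpha> ^ (map (\<lambda>x. x - m) L ! i) = b * \<alpha> ^ (L ! i)"
    using mi i L by (simp add: power_add[symmetric])
  have pl: "prev_level (map (\<lambda>x. x - m) L) i = (if i = 0 then 0 else prev_level L i - m)"
    using i L by (simp add: prev_level_def)
  have pm: "i \<noteq> 0 \<Longrightarrow> m \<le> prev_level L i" using m i by (simp add: prev_level_def)
  have d: "real (L ! i - m) - real (prev_level (map (\<lambda>x. x - m) L) i)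
      \<le> real (L ! i) - real (prev_level L i)"
    using pl pm mi by (cases "i = 0") (auto simp: prev_level_def of_nat_diff)
  have ln0: "0 \<le> ln (real (length S))" using assms(6) by (simp add: Suc_le_eq)
  have "pen (length S) \<gamma> (prev_level (map (\<lambda>x. x - m) L) i) (map (\<lambda>x. x - m) L ! i)
      \<le> pen (length S) \<gamma> (prev_level L i) (L ! i)"
    unfolding pen_def using i L d ln0 assms(5)
    by (auto intro!: mult_right_mono)
  then show "- ln (p_geo (S ! i) (b * \<alpha> ^ m * \<alpha> ^ (map (\<lambda>x. x - m) L ! i))) +
         pen (length S) \<gamma> (prev_level (map (\<lambda>x. x - m) L) i) (map (\<lambda>x. x - m) L ! i)
         \<le> - ln (p_geo (S ! i) (b * \<alpha> ^ (L ! i))) + pen (length S) \<gamma> (prev_level L i) (L ! i)"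
    unfolding e1 by linarith
qed

lemma lik_strict:
  assumes "0 < \<alpha>" "\<alpha> < 1" "0 < b1" "b1 < b2" "b2 < 1" "S \<noteq> []"
  shows "lik S \<alpha> L b1 < lik S \<alpha> L b2"
  unfolding lik_def
proof (rule sum_strict_mono)
  show "{..<length S} \<noteq> {}" using assms by auto
next
  fix i
  have p: "0 < \<alpha> ^ (L ! i)" "\<alpha> ^ (L ! i) \<le> 1" using assms(1,2) by (auto simp: power_le_one)
  have "b2 * \<alpha> ^ (L ! i) < 1" using p assms
    by (intro prod_lt1) auto
  moreover have "b1 * \<alpha> ^ (L ! i) < b2 * \<alpha> ^ (L ! i)" using p assms by simp
  moreover have "0 < b1 * \<alpha> ^ (L ! i)" using p assms by simp
  ultimately show "- ln (1 - b1 * \<alpha> ^ (L ! i)) < - ln (1 - b2 * \<alpha> ^ (L ! i))" by simp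
qed simp

theorem proposition2:
  fixes S :: "nat list" and \<alpha> \<gamma> \<epsilon> \<beta> \<beta>s :: real and k :: nat
    and L Ls :: "nat list" and V :: "real \<Rightarrow> nat list"
  assumes "S \<noteq> []"
    and "0 < \<alpha>" and "\<alpha> < 1" and "0 < \<gamma>" and "0 < k" and "0 < \<epsilon>"
    and "\<forall>b. 0 < b \<and> b < 1 \<longrightarrow> is_viterbi S \<alpha> b \<gamma> k (V b)"
    and "geo_optimal S \<alpha> \<gamma> k Ls \<beta>s"
    and "geo_alpha_output V S \<alpha> \<gamma> k \<epsilon> L \<beta>"
  shows "score_geo L S \<alpha> \<beta> \<gamma> \<le> (1 + \<epsilon>) * score_geo Ls S \<alpha> \<beta>s \<gamma>"
proof -
  note ne = assms(1) and a0 = assms(2) and a1 = assms(3) and g0 = assms(4) and e0 = assms(6)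
  define n where "n = length S"
  define T where "T = tot S"
  have n0: "0 < real n" using ne n_def by simp
  have T0: "0 \<le> T" unfolding T_def tot_def by (simp add: sum_nonneg)
  have mean: "mean_seq S = T / real n" unfolding mean_seq_def T_def tot_def n_def by simp
  from assms(8) have Ls: "level_seq n k Ls" and bs0: "0 < \<beta>s" and bs1: "\<beta>s < 1"
    and opt: "\<forall>L' \<beta>'. level_seq n k L' \<and> 0 < \<beta>' \<and> \<beta>' < 1 \<longrightarrow>
        score_geo Ls S \<alpha> \<beta>s \<gamma> \<le> score_geo L' S \<alpha> \<beta>' \<gamma>"
    unfolding geo_optimal_def n_def by auto
  show ?thesis
  proof (cases "mean_seq S = 0")
    case True
    then have T00: "T = 0" using mean n0 by simp
    have "score_geo Ls S \<alpha> (\<beta>s / 2) \<gamma> < score_geo Ls S \<alpha> \<beta>s \<gamma>"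
      using score_decomp[OF a0 a1, of "\<beta>s/2" Ls S \<gamma>] score_decomp[OF a0 a1 bs0 bs1, of Ls S \<gamma>]
        lik_strict[OF a0 a1, of "\<beta>s/2" \<beta>s S Ls] bs0 bs1 ne T00 unfolding T_def by simp
    moreover have "score_geo Ls S \<alpha> \<beta>s \<gamma> \<le> score_geo Ls S \<alpha> (\<beta>s / 2) \<gamma>"
      using opt Ls bs0 bs1 by simp
    ultimately show ?thesis by simp
  next
    case False
    then have Tp: "0 < T" using mean T0 n0 by simp
    from False assms(9) have bt: "\<beta> \<in> ga_tested S \<epsilon>" and LV: "L = V \<beta>"
      and best: "\<forall>\<beta>'\<in>ga_tested S \<epsilon>. score_geo (V \<beta>) S \<alpha> \<beta> \<gamma> \<le> score_geo (V \<beta>') S \<alpha> \<beta>' \<gamma>"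
      unfolding geo_alpha_output_def by auto
    define m where "m = Min (set Ls)"
    have lenLs: "length Ls = n" using Ls unfolding level_seq_def by simp
    have "m \<in> set Ls" unfolding m_def using lenLs n0 by (intro Min_in) auto
    then obtain i0 where i0: "i0 < n" "Ls ! i0 = m" using lenLs by (auto simp: in_set_conv_nth)
    have mle: "\<forall>i<n. m \<le> Ls ! i" unfolding m_def using lenLs by auto
    define L' where "L' = map (\<lambda>x. x - m) Ls"
    have L'lev: "level_seq n k L'" unfolding L'_def by (rule shift_level_seq[OF Ls mle])
    have L'i0: "L' ! i0 = 0" unfolding L'_def using i0 lenLs by simp
    define b' where "b' = \<beta>s * \<alpha> ^ m"
    have am: "0 < \<alpha> ^ m" "\<alpha> ^ m \<le> 1" using a0 a1 by (auto simp: power_le_one)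
    have b'0: "0 < b'" unfolding b'_def using bs0 am by simp
    have b'1: "b' < 1" unfolding b'_def using bs0 bs1 am by (intro prod_lt1) auto
    have st1: "score_geo L' S \<alpha> b' \<gamma> \<le> score_geo Ls S \<alpha> \<beta>s \<gamma>"
      unfolding L'_def b'_def
      by (rule shift_score[OF a0 a1 bs0 bs1 g0 ne]) (use lenLs mle n_def in auto)
    define \<eta> where "\<eta> = T / (T + real n)"
    define B where "B = T / (T + 1)"
    have eta0: "0 < \<eta>" unfolding \<eta>_def using Tp n0 by simp
    have etaB: "\<eta> \<le> B" unfolding \<eta>_def B_def using Tp n0 ne n_def
      by (intro divide_left_mono) (auto simp: Suc_le_eq)
    have B1: "B < 1" unfolding B_def using Tp by simp
    define G where "G = (\<lambda>x. lik S \<alpha> L' x - T * ln x)"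
    define R where "R = rest S \<alpha> \<gamma> L'"
    have R0: "0 \<le> R" unfolding R_def by (rule rest_nonneg[OF a0 a1 g0 ne])
    have sc: "score_geo L' S \<alpha> x \<gamma> = G x + R" if "0 < x" "x < 1" for x
      unfolding G_def R_def T_def using score_decomp[OF a0 a1 that] by simp
    define b0 where "b0 = (if b' < \<eta> then \<eta> else if B < b' then B else b')"
    have b0e: "\<eta> \<le> b0" and b0B: "b0 \<le> B" unfolding b0_def using etaB by auto
    have b00: "0 < b0" and b01: "b0 < 1" using b0e b0B eta0 B1 by auto
    have Gb0: "G b0 \<le> G b'"
    proof (cases "b' < \<eta>")
      case True
      have "\<eta> * (tot S + real (length S)) \<le> tot S"
        unfolding \<eta>_def T_def n_def using Tp T_def by simp
      then have "G \<eta> \<le> G b'" unfolding G_def T_def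
        by (intro G_dec[OF a0 a1 b'0] ne) (use True in auto)
      then show ?thesis unfolding b0_def using True by simp
    next
      case F1: False
      show ?thesis
      proof (cases "B < b'")
        case True
        have "tot S \<le> B * (tot S + 1)"
          unfolding B_def T_def using Tp T_def by simp
        moreover have "i0 < length S" using i0 n_def by simp
        moreover have "0 < tot S" using Tp T_def by simp
        ultimately have "G B \<le> G b'" unfolding G_def T_def
          using G_inc[OF a0 a1 _ b'1, of B S i0 L'] True L'i0 by simp
        then show ?thesis unfolding b0_def using True F1 by simp
      qed (use F1 in \<open>simp add: b0_def\<close>)
    qed
    have st2: "score_geo L' S \<alpha> b0 \<gamma> \<le> score_geo L' S \<alpha> b' \<gamma>"
      using sc[OF b00 b01] sc[OF b'0 b'1] Gb0 by simp
    define c0 where "c0 = ln b0 / ln \<eta>"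
    have lneta: "ln \<eta> < 0" using eta0 etaB B1 by simp
    have lnb0: "ln b0 < 0" using b00 b01 by simp
    have c00: "0 < c0" unfolding c0_def using lneta lnb0 by (simp add: divide_neg_neg)
    have "ln \<eta> \<le> ln b0" using b0e eta0 by simp
    then have c01: "c0 \<le> 1" unfolding c0_def using lneta by (simp add: divide_simps)
    obtain j where j1: "c0 \<le> 1 / (1 + \<epsilon>) ^ j" and j2: "1 / (1 + \<epsilon>) ^ j \<le> (1 + \<epsilon>) * c0"
      using grid[OF c00 c01 e0] by blast
    have mean_eta: "mean_seq S / (mean_seq S + 1) = \<eta>"
      unfolding mean \<eta>_def using n0 Tp by (simp add: field_simps)
    have mean_B: "mean_seq S / (mean_seq S + 1 / real (length S)) = B"
      unfolding mean B_def using n0 Tp n_def by (simp add: field_simps)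
    have gb: "ga_beta S \<epsilon> i = exp (ln \<eta> / (1 + \<epsilon>) ^ i)" for i
    proof -
      have "(1 + \<epsilon>) powr (- real i) = 1 / (1 + \<epsilon>) ^ i"
        using e0 by (simp add: powr_minus powr_realpow divide_inverse)
      then show ?thesis unfolding ga_beta_def mean_eta using eta0 by (simp add: powr_def)
    qed
    have gble: "ga_beta S \<epsilon> i \<le> b0" if "i \<le> j" for i
    proof -
      have "(1 + \<epsilon>) ^ i \<le> (1 + \<epsilon>) ^ j" using that e0 by (intro power_increasing) auto
      then have "1 / (1 + \<epsilon>) ^ j \<le> 1 / (1 + \<epsilon>) ^ i" using e0
        by (intro divide_left_mono) auto
      then have "c0 \<le> 1 / (1 + \<epsilon>) ^ i" using j1 by linarith
      then have "ln \<eta> * (1 / (1 + \<epsilon>) ^ i) \<le> ln \<eta> * c0" using lneta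
        by (intro mult_left_mono_neg) auto
      also have "ln \<eta> * c0 = ln b0" unfolding c0_def using lneta by simp
      finally have "ln \<eta> / (1 + \<epsilon>) ^ i \<le> ln b0" by simp
      then have "exp (ln \<eta> / (1 + \<epsilon>) ^ i) \<le> exp (ln b0)" by simp
      then show ?thesis unfolding gb using b00 by simp
    qed
    define bj where "bj = ga_beta S \<epsilon> j"
    have bjt: "bj \<in> ga_tested S \<epsilon>" unfolding ga_tested_def bj_def mean_B
      using gble b0B by force
    have bj0: "0 < bj" unfolding bj_def gb by simp
    have bjb0: "bj \<le> b0" unfolding bj_def using gble by simp
    have bj1: "bj < 1" using bjb0 b01 by simp
    have lnbj: "ln bj = ln \<eta> * (1 / (1 + \<epsilon>) ^ j)" unfolding bj_def gb by simp
    have "(- ln \<eta>) * (1 / (1 + \<epsilon>) ^ j) \<le> (- ln \<eta>) * ((1 + \<epsilon>) * c0)" using j2 lneta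
      by (intro mult_left_mono) auto
    then have "- ln bj \<le> - ln \<eta> * ((1 + \<epsilon>) * c0)" unfolding lnbj by simp
    also have "\<dots> = (1 + \<epsilon>) * (- ln b0)" unfolding c0_def using lneta by simp
    finally have lnbj2: "- ln bj \<le> (1 + \<epsilon>) * (- ln b0)" .
    have vit: "is_viterbi S \<alpha> bj \<gamma> k (V bj)" using assms(7) bj0 bj1 by simp
    have st3: "score_geo (V bj) S \<alpha> bj \<gamma> \<le> score_geo L' S \<alpha> bj \<gamma>"
      using vit L'lev unfolding is_viterbi_def n_def by simp
    have likm: "lik S \<alpha> L' bj \<le> lik S \<alpha> L' b0" by (rule lik_mono[OF a0 a1 bj0 bjb0 b01])
    have lik0: "0 \<le> lik S \<alpha> L' b0" by (rule lik_nonneg[OF a0 a1 b00 b01])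
    have "T * (- ln bj) \<le> T * ((1 + \<epsilon>) * (- ln b0))" using lnbj2 T0 by (rule mult_left_mono)
    then have st4: "score_geo L' S \<alpha> bj \<gamma> \<le> (1 + \<epsilon>) * score_geo L' S \<alpha> b0 \<gamma>"
      unfolding sc[OF bj0 bj1] sc[OF b00 b01] G_def using likm lik0 R0 e0 lnb0 T0
      by (simp add: algebra_simps) (smt (verit) mult_nonneg_nonneg)
    have "score_geo L S \<alpha> \<beta> \<gamma> \<le> score_geo (V bj) S \<alpha> bj \<gamma>" using best bjt LV by simp
    also have "\<dots> \<le> score_geo L' S \<alpha> bj \<gamma>" by (rule st3)
    also have "\<dots> \<le> (1 + \<epsilon>) * score_geo L' S \<alpha> b0 \<gamma>" by (rule st4)
    also have "\<dots> \<le> (1 + \<epsilon>) * score_geo Ls S \<alpha> \<beta>s \<gamma>"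
      using st1 st2 e0 by (intro mult_left_mono) auto
    finally show ?thesis .
  qed
qed

end
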